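(* Let $n$ DMUs, indexed by $J$, each use $m$ inputs (indexed by $I$) and produce $s$ outputs (indexed by $R$), with $n\ge2(m+s)$ and all data $x_{ij}>0$, $y_{rj}>0$. Let $o$ be a DMU that is efficient in the PT model (PT efficiency equal to $1$). For a goal price $\tau_o>0$, the TVG (primal) program of the sPT model is $$\Delta_o^{sPT}=\max_{v_o,u_o}\ -\sum_{i}v_{io}x_{io}+\sum_r u_{ro}y_{ro}$$ subject to $-\sum_i v_{io}x_{ij}+\sum_r u_{ro}y_{rj}\le0$ for all $j\in J\setminus\{o\}$, $x_{io}v_{io}\ge\tau_o$ ($i\in I$), $y_{ro}u_{ro}\ge\tau_o$ ($r\in R$), with $v_o\ge0$ and $u_o$ free. Let $(v_o^\#,u_o^\#)$ be optimal for $\tau_o=1$ (Step I), $\bar t=1/\sum_r u^\#_{ro}y_{ro}$, and $(v_o^\star,u_o^\star)=\bar t(v_o^\#,u_o^\#)$ (Step II). With $\alpha_o^\star=\sum_i v^\star_{io}x_{io}$ and $\beta_o^\star=\sum_r u^\star_{ro}y_{ro}$, the super-pure-technical efficiency $E_o^{sPT\star}=\beta_o^\star/\alpha_o^\star$ satisfies $E_o^{sPT\star}\ge1$.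
   Context: The PT model for DMU-$o$ is the linear program $\min\sum_i v_{io}x_{io}-\sum_r u_{ro}y_{ro}$ s.t. $\sum_i v_{io}x_{ij}-\sum_r u_{ro}y_{rj}\ge0$ ($j\in J$), $x_{io}v_{io}\ge\tau_o$, $y_{ro}u_{ro}\ge\tau_o$, $v_o,u_o$ free; its efficiency is $\sum_r u^\star_{ro}y_{ro}/\sum_i v^\star_{io}x_{io}$ at an optimal solution. The TAP (dual) program of the sPT model is $\min\sum_iQ_{io}\tau_o+\sum_rP_{ro}\tau_o$ s.t. $-\sum_{j\ne o}x_{ij}\pi_{jo}+Q_{io}x_{io}\ge-x_{io}$, $\sum_{j\ne o}y_{rj}\pi_{jo}+P_{ro}y_{ro}=y_{ro}$, $\pi_o,Q_o,P_o\ge0$. *)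

theory Defs
  imports Complex_Main
begin

text \<open>DEA data: inputs indexed by I, outputs by R, DMUs by J.
  x i j = input i of DMU j, y r j = output r of DMU j.
  Multiplier vectors are total functions; only their values on I resp. R matter.\<close>

definition virtual_input :: "'i set \<Rightarrow> ('i \<Rightarrow> 'j \<Rightarrow> real) \<Rightarrow> ('i \<Rightarrow> real) \<Rightarrow> 'j \<Rightarrow> real" where
  "virtual_input I x v j = (\<Sum>i\<in>I. v i * x i j)"

definition virtual_output :: "'r set \<Rightarrow> ('r \<Rightarrow> 'j \<Rightarrow> real) \<Rightarrow> ('r \<Rightarrow> real) \<Rightarrow> 'j \<Rightarrow> real" where
  "virtual_output R y u j = (\<Sum>r\<in>R. u r * y r j)"

definition PT_feasible where
  "PT_feasible I R J x y d0 tau v u \<longleftrightarrow>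
     (\<forall>j\<in>J. virtual_input I x v j - virtual_output R y u j \<ge> 0) \<and>
     (\<forall>i\<in>I. x i d0 * v i \<ge> tau) \<and> (\<forall>r\<in>R. y r d0 * u r \<ge> tau)"

definition PT_objective where
  "PT_objective I R x y d0 v u = virtual_input I x v d0 - virtual_output R y u d0"

definition PT_optimal where
  "PT_optimal I R J x y d0 tau v u \<longleftrightarrow>
     PT_feasible I R J x y d0 tau v u \<and>
     (\<forall>v' u'. PT_feasible I R J x y d0 tau v' u' \<longrightarrow>
        PT_objective I R x y d0 v u \<le> PT_objective I R x y d0 v' u')"

definition PT_efficiency where
  "PT_efficiency I R x y d0 v u = virtual_output R y u d0 / virtual_input I x v d0"

definition PT_efficient where
  "PT_efficient I R J x y d0 \<longleftrightarrow>
     (\<exists>tau>0. \<exists>v u. PT_optimal I R J x y d0 tau v u \<and> PT_efficiency I R x y d0 v u = 1)"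

definition sPT_feasible where
  "sPT_feasible I R J x y d0 tau v u \<longleftrightarrow>
     (\<forall>j\<in>J - {d0}. - virtual_input I x v j + virtual_output R y u j \<le> 0) \<and>
     (\<forall>i\<in>I. x i d0 * v i \<ge> tau) \<and> (\<forall>r\<in>R. y r d0 * u r \<ge> tau) \<and>
     (\<forall>i\<in>I. v i \<ge> 0)"

definition sPT_objective where
  "sPT_objective I R x y d0 v u = - virtual_input I x v d0 + virtual_output R y u d0"

definition sPT_optimal where
  "sPT_optimal I R J x y d0 tau v u \<longleftrightarrow>
     sPT_feasible I R J x y d0 tau v u \<and>
     (\<forall>v' u'. sPT_feasible I R J x y d0 tau v' u' \<longrightarrow>
        sPT_objective I R x y d0 v' u' \<le> sPT_objective I R x y d0 v u)"

end

theory Submission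
  imports Defs
begin

lemma vi_scale: "virtual_input I x (\<lambda>i. c * v i) j = c * virtual_input I x v j"
  unfolding virtual_input_def by (simp add: sum_distrib_left mult.assoc)

lemma vo_scale: "virtual_output R y (\<lambda>i. c * u i) j = c * virtual_output R y u j"
  unfolding virtual_output_def by (simp add: sum_distrib_left mult.assoc)

theorem theorem6:
  fixes I :: "'i set" and R :: "'r set" and J :: "'j set"
    and x :: "'i \<Rightarrow> 'j \<Rightarrow> real" and y :: "'r \<Rightarrow> 'j \<Rightarrow> real" and d0 :: 'j
    and vh :: "'i \<Rightarrow> real" and uh :: "'r \<Rightarrow> real"
  assumes "finite I" "finite R" "finite J"
    and "I \<noteq> {}" "R \<noteq> {}"
    and "d0 \<in> J"
    and "card J \<ge> 2 * (card I + card R)"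
    and "\<forall>i\<in>I. \<forall>j\<in>J. x i j > 0"
    and "\<forall>r\<in>R. \<forall>j\<in>J. y r j > 0"
    and "PT_efficient I R J x y d0"
    and "sPT_optimal I R J x y d0 1 vh uh"
  shows "let tbar = 1 / virtual_output R y uh d0;
             vstar = (\<lambda>i. tbar * vh i);
             ustar = (\<lambda>r. tbar * uh r);
             alpha = virtual_input I x vstar d0;
             beta = virtual_output R y ustar d0
         in beta / alpha \<ge> 1"
proof -
  define A where "A = virtual_input I x vh d0"
  define B where "B = virtual_output R y uh d0"
  have feas: "sPT_feasible I R J x y d0 1 vh uh" and
    opt: "\<And>v' u'. sPT_feasible I R J x y d0 1 v' u' \<Longrightarrow>
        sPT_objective I R x y d0 v' u' \<le> sPT_objective I R x y d0 vh uh"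
    using assms(11) unfolding sPT_optimal_def by auto
  have Apos: "A > 0"
  proof -
    have "\<forall>i\<in>I. vh i * x i d0 > 0" using feas unfolding sPT_feasible_def
      by (auto simp: mult.commute)
    then show ?thesis unfolding A_def virtual_input_def
      using assms(1,4) by (simp add: sum_pos)
  qed
  have Bpos: "B > 0"
  proof -
    have "\<forall>r\<in>R. uh r * y r d0 > 0" using feas unfolding sPT_feasible_def
      by (auto simp: mult.commute)
    then show ?thesis unfolding B_def virtual_output_def
      using assms(2,5) by (simp add: sum_pos)
  qed
  obtain tau v u where tau: "tau > 0" and pto: "PT_optimal I R J x y d0 tau v u"
    and eff: "PT_efficiency I R x y d0 v u = 1"
    using assms(10) unfolding PT_efficient_def by blast
  have pf: "PT_feasible I R J x y d0 tau v u" using pto unfolding PT_optimal_def by simp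
  have vpos: "\<forall>i\<in>I. v i > 0"
  proof
    fix i assume i: "i \<in> I"
    have "x i d0 * v i \<ge> tau" using pf i unfolding PT_feasible_def by auto
    moreover have "x i d0 > 0" using assms(8,6) i by auto
    ultimately show "v i > 0" using tau
      by (metis linorder_not_le mult_nonneg_nonpos order.strict_trans1 less_eq_real_def)
  qed
  have VIpos: "virtual_input I x v d0 > 0"
    unfolding virtual_input_def using vpos assms(1,4,6,8) by (intro sum_pos) auto
  have eq: "virtual_output R y u d0 = virtual_input I x v d0"
    using eff VIpos unfolding PT_efficiency_def by (simp add: divide_eq_1_iff)
  define v' where "v' = (\<lambda>i. (1/tau) * v i)"
  define u' where "u' = (\<lambda>r. (1/tau) * u r)"
  have "sPT_feasible I R J x y d0 1 v' u'"
    unfolding sPT_feasible_def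
  proof (intro conjI ballI)
    fix j assume "j \<in> J - {d0}"
    then have "virtual_input I x v j - virtual_output R y u j \<ge> 0"
      using pf unfolding PT_feasible_def by auto
    then show "- virtual_input I x v' j + virtual_output R y u' j \<le> 0"
    proof -
      have "(1/tau) * (virtual_input I x v j - virtual_output R y u j) \<ge> 0"
        using tau \<open>virtual_input I x v j - virtual_output R y u j \<ge> 0\<close> by simp
      moreover have "virtual_input I x v' j = (1/tau) * virtual_input I x v j"
        unfolding v'_def by (rule vi_scale)
      moreover have "virtual_output R y u' j = (1/tau) * virtual_output R y u j"
        unfolding u'_def by (rule vo_scale)
      ultimately show ?thesis by (simp add: right_diff_distrib)
    qed
  next
    fix i assume "i \<in> I"
    then have "x i d0 * v i \<ge> tau" using pf unfolding PT_feasible_def by auto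
    then show "x i d0 * v' i \<ge> 1" unfolding v'_def using tau by (simp add: field_simps)
  next
    fix r assume "r \<in> R"
    then have "y r d0 * u r \<ge> tau" using pf unfolding PT_feasible_def by auto
    then show "y r d0 * u' r \<ge> 1" unfolding u'_def using tau by (simp add: field_simps)
  next
    fix i assume "i \<in> I"
    then show "v' i \<ge> 0" unfolding v'_def using vpos tau by auto
  qed
  from opt[OF this] have "sPT_objective I R x y d0 v' u' \<le> B - A"
    unfolding sPT_objective_def A_def B_def by simp
  moreover have "sPT_objective I R x y d0 v' u' = 0"
    unfolding sPT_objective_def v'_def u'_def vi_scale vo_scale eq by simp
  ultimately have BA: "A \<le> B" by simp
  show ?thesis
    unfolding Let_def vi_scale vo_scale A_def[symmetric] B_def[symmetric]
    using Apos Bpos BA by (simp add: field_simps)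
qed

end
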